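(* Let $G$ be a connected bipartite graph with bipartition $(U,V)$, $|U|\ge |V|$. Let $V_W\subseteq V$ be the set of vertices of $V$ adjacent to at least one leaf of $G$, $\overline{V_W}=V\setminus V_W$, let $U_L\subseteq U$ be a set of leaves such that each $v\in V_W$ is adjacent to exactly one element of $U_L$ and $|U_L|=|V_W|$, and $\overline{U_L}=U\setminus U_L$. Let $X=\{S\subseteq \overline{U_L} : S\neq\emptyset,\ N(S)=\overline{V_W}\}$ and $q=|\{S\in X: |S| \text{ even}\}|-|\{S\in X : |S|\text{ odd}\}|$. Then: (a) if $\overline{V_W}=\emptyset$, then $\deg h_{R/I(G)}(t)=\alpha(G)$; (b) if $\overline{V_W}\neq\emptyset$, then $\deg h_{R/I(G)}(t)=\alpha(G)$ if and only if $q\neq 0$.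
   Context: $N(S)$ denotes the set of all vertices adjacent to some vertex of $S$. A leaf is a vertex with exactly one neighbor. $\alpha(G)$ is the maximum size of an independent set of $G$ (a set of vertices no two of which are adjacent). For a finite simple graph $G$ on vertices $x_1,\dots,x_n$, $R=k[x_1,\dots,x_n]$ over a field $k$, $I(G)=(x_ix_j:\{x_i,x_j\}\in E(G))$, and $h_{R/I(G)}(t)$ is the $h$-polynomial: the numerator of the Hilbert series $\sum_i \dim_k(R/I(G))_i t^i$ written as a reduced fraction $h_{R/I(G)}(t)/(1-t)^{\dim R/I(G)}$. *)

theory Defs
  imports Main "HOL-Computational_Algebra.Polynomial_FPS"
begin

definition simple_graph :: "'a set \<Rightarrow> 'a set set \<Rightarrow> bool" where
  "simple_graph Vs E \<longleftrightarrow> finite Vs \<and> (\<forall>e\<in>E. e \<subseteq> Vs \<and> card e = 2)"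

definition adj :: "'a set set \<Rightarrow> 'a \<Rightarrow> 'a \<Rightarrow> bool" where
  "adj E x y \<longleftrightarrow> {x, y} \<in> E"

definition connected_graph :: "'a set \<Rightarrow> 'a set set \<Rightarrow> bool" where
  "connected_graph Vs E \<longleftrightarrow> (\<forall>x\<in>Vs. \<forall>y\<in>Vs. (adj E)\<^sup>*\<^sup>* x y)"

definition bipartition :: "'a set \<Rightarrow> 'a set set \<Rightarrow> 'a set \<Rightarrow> 'a set \<Rightarrow> bool" where
  "bipartition Vs E U V \<longleftrightarrow> U \<noteq> {} \<and> V \<noteq> {} \<and> U \<inter> V = {} \<and> U \<union> V = Vs \<and>
     (\<forall>e\<in>E. \<exists>u\<in>U. \<exists>v\<in>V. e = {u, v})"

definition nbhd :: "'a set set \<Rightarrow> 'a set \<Rightarrow> 'a set" where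
  "nbhd E S = {y. \<exists>x\<in>S. adj E x y}"

definition leaf :: "'a set \<Rightarrow> 'a set set \<Rightarrow> 'a \<Rightarrow> bool" where
  "leaf Vs E x \<longleftrightarrow> x \<in> Vs \<and> card {y. adj E x y} = 1"

definition independent :: "'a set set \<Rightarrow> 'a set \<Rightarrow> bool" where
  "independent E S \<longleftrightarrow> (\<forall>x\<in>S. \<forall>y\<in>S. \<not> adj E x y)"

definition alpha :: "'a set \<Rightarrow> 'a set set \<Rightarrow> nat" where
  "alpha Vs E = Max {card S | S. S \<subseteq> Vs \<and> independent E S}"

(* Hilbert function of R/I(G), R = k[x_v : v in Vs]: dim_k (R/I(G))_i equals the number of
   degree-i monomials (exponent vectors m supported on Vs) not in the monomial ideal I(G),
   i.e. not divisible by any edge monomial x_u x_v.  (Independent of the field k.) *)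
definition hilbert_fun :: "'a set \<Rightarrow> 'a set set \<Rightarrow> nat \<Rightarrow> nat" where
  "hilbert_fun Vs E i = card {m :: 'a \<Rightarrow> nat. (\<forall>x. x \<notin> Vs \<longrightarrow> m x = 0) \<and>
       (\<Sum>x\<in>Vs. m x) = i \<and> (\<forall>e\<in>E. \<not> (\<forall>x\<in>e. 0 < m x))}"

definition hilbert_series :: "'a set \<Rightarrow> 'a set set \<Rightarrow> int fps" where
  "hilbert_series Vs E = Abs_fps (\<lambda>i. int (hilbert_fun Vs E i))"

(* h-polynomial: numerator h of HS(t) = h(t)/(1-t)^d written as a reduced fraction (h(1) \<noteq> 0) *)
definition h_poly :: "'a set \<Rightarrow> 'a set set \<Rightarrow> int poly" where
  "h_poly Vs E = (THE h. \<exists>d::nat. fps_of_poly h = hilbert_series Vs E * (1 - fps_X) ^ d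
                               \<and> poly h 1 \<noteq> 0)"

end

theory Submission
  imports Defs "HOL-Library.Multiset"
begin

unbundle fps_syntax


lemma alt_pow_sum:
  assumes "finite A"
  shows "(\<Sum>L\<in>Pow A. (-1::int) ^ card L) = (if A = {} then 1 else 0)"
  using assms
proof (induction rule: finite_induct)
  case empty
  then show ?case by simp
next
  case (insert a A)
  have fin: "finite (Pow A)" "finite (insert a ` Pow A)" using insert by auto
  have disj: "Pow A \<inter> insert a ` Pow A = {}" using insert by auto
  have inj: "inj_on (insert a) (Pow A)" unfolding inj_on_def
  proof (intro ballI impI)
    fix x y assume "x \<in> Pow A" "y \<in> Pow A" "insert a x = insert a y"
    then show "x = y" using insert(2) by (metis PowD insert_ident subsetD)
  qed
  have "(\<Sum>L\<in>Pow (insert a A). (-1::int) ^ card L)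
     = (\<Sum>L\<in>Pow A. (-1::int) ^ card L) + (\<Sum>L\<in>insert a ` Pow A. (-1::int) ^ card L)"
    unfolding Pow_insert by (rule sum.union_disjoint[OF fin disj])
  also have "(\<Sum>L\<in>insert a ` Pow A. (-1::int) ^ card L) = (\<Sum>L\<in>Pow A. (-1::int) ^ card (insert a L))"
    by (rule sum.reindex[OF inj, unfolded comp_def])
  also have "\<dots> = (\<Sum>L\<in>Pow A. - ((-1::int) ^ card L))"
  proof (rule sum.cong[OF refl])
    fix L assume "L \<in> Pow A"
    then have "finite L" "a \<notin> L" using insert finite_subset by auto
    then show "(-1::int) ^ card (insert a L) = - ((-1) ^ card L)" by simp
  qed
  finally show ?case by (simp add: sum_negf)
qed

lemma alt_split:
  fixes F0 :: "'a set set" and Y :: "'a set" and g :: "'a set \<Rightarrow> 'a set"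
  assumes finY: "finite Y" and finF0: "finite F0" and fin0: "\<forall>T0\<in>F0. finite T0"
    and disj: "\<forall>T0\<in>F0. T0 \<inter> Y = {}"
    and F: "F = (\<Union>T0\<in>F0. (\<lambda>L. T0 \<union> L) ` Pow (Y - g T0))"
  shows "(\<Sum>T\<in>F. (-1::int) ^ card T) = (\<Sum>T0\<in>{T0\<in>F0. Y \<subseteq> g T0}. (-1::int) ^ card T0)"
proof -
  have "(\<Sum>T\<in>F. (-1::int) ^ card T) = (\<Sum>T0\<in>F0. \<Sum>T\<in>(\<lambda>L. T0 \<union> L) ` Pow (Y - g T0). (-1::int) ^ card T)"
    unfolding F
  proof (rule sum.UNION_disjoint[OF finF0])
    show "\<forall>T0\<in>F0. finite ((\<lambda>L. T0 \<union> L) ` Pow (Y - g T0))" using finY by auto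
    show "\<forall>T0\<in>F0. \<forall>T1\<in>F0. T0 \<noteq> T1 \<longrightarrow>
      (\<lambda>L. T0 \<union> L) ` Pow (Y - g T0) \<inter> (\<lambda>L. T1 \<union> L) ` Pow (Y - g T1) = {}"
    proof (intro ballI impI)
      fix T0 T1 assume a: "T0 \<in> F0" "T1 \<in> F0" "T0 \<noteq> T1"
      show "(\<lambda>L. T0 \<union> L) ` Pow (Y - g T0) \<inter> (\<lambda>L. T1 \<union> L) ` Pow (Y - g T1) = {}"
      proof (rule ccontr)
        assume "\<not> ?thesis"
        then obtain L1 L2 where "L1 \<subseteq> Y" "L2 \<subseteq> Y" "T0 \<union> L1 = T1 \<union> L2" by blast
        then have "(T0 \<union> L1) - Y = (T1 \<union> L2) - Y" by simp
        moreover have "(T0 \<union> L1) - Y = T0" "(T1 \<union> L2) - Y = T1"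
          using disj a \<open>L1 \<subseteq> Y\<close> \<open>L2 \<subseteq> Y\<close> by blast+
        ultimately show False using a by simp
      qed
    qed
  qed
  also have "\<dots> = (\<Sum>T0\<in>F0. if Y \<subseteq> g T0 then (-1::int) ^ card T0 else 0)"
  proof (rule sum.cong[OF refl])
    fix T0 assume T0: "T0 \<in> F0"
    have inj: "inj_on (\<lambda>L. T0 \<union> L) (Pow (Y - g T0))"
      using disj T0 unfolding inj_on_def by blast
    have "(\<Sum>T\<in>(\<lambda>L. T0 \<union> L) ` Pow (Y - g T0). (-1::int) ^ card T)
        = (\<Sum>L\<in>Pow (Y - g T0). (-1::int) ^ card (T0 \<union> L))"
      by (rule sum.reindex[OF inj, unfolded comp_def])
    also have "\<dots> = (\<Sum>L\<in>Pow (Y - g T0). (-1::int) ^ card T0 * (-1) ^ card L)"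
    proof (rule sum.cong[OF refl])
      fix L assume "L \<in> Pow (Y - g T0)"
      then have "finite L" "T0 \<inter> L = {}" using finY finite_subset disj T0 by blast+
      then show "(-1::int) ^ card (T0 \<union> L) = (-1) ^ card T0 * (-1) ^ card L"
        using fin0 T0 by (simp add: card_Un_disjoint power_add)
    qed
    also have "\<dots> = (-1::int) ^ card T0 * (\<Sum>L\<in>Pow (Y - g T0). (-1) ^ card L)"
      by (simp add: sum_distrib_left)
    also have "\<dots> = (if Y \<subseteq> g T0 then (-1::int) ^ card T0 else 0)"
      using finY by (simp add: alt_pow_sum)
    finally show "(\<Sum>T\<in>(\<lambda>L. T0 \<union> L) ` Pow (Y - g T0). (-1::int) ^ card T) = (if Y \<subseteq> g T0 then (-1::int) ^ card T0 else 0)" .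
  qed
  also have "\<dots> = (\<Sum>T0\<in>{T0\<in>F0. Y \<subseteq> g T0}. (-1::int) ^ card T0)"
    using finF0 by (simp add: sum.inter_filter)
  finally show ?thesis .
qed






lemma size_count_sum:
  assumes "finite T" "set_mset M \<subseteq> T"
  shows "size M = sum (count M) T"
proof -
  have "size M = sum (count M) (set_mset M)"
    by (simp add: size_multiset_overloaded_eq)
  also have "\<dots> = sum (count M) T"
    using assms by (intro sum.mono_neutral_left) (auto simp: count_eq_zero_iff)
  finally show ?thesis .
qed

definition Pset :: "'a set \<Rightarrow> nat \<Rightarrow> ('a \<Rightarrow> nat) set" where
  "Pset T i = {m. {x. 0 < m x} = T \<and> sum m T = i}"

lemma Pset_image:
  assumes fin: "finite T" and ik: "card T \<le> i"
  shows "Pset T i = (\<lambda>M x. if x \<in> T then count M x + 1 else 0) ` multisets_of_size T (i - card T)"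
proof
  show "(\<lambda>M x. if x \<in> T then count M x + 1 else 0) ` multisets_of_size T (i - card T) \<subseteq> Pset T i"
  proof
    fix f assume "f \<in> (\<lambda>M x. if x \<in> T then count M x + 1 else 0) ` multisets_of_size T (i - card T)"
    then obtain M where M: "set_mset M \<subseteq> T" "size M = i - card T"
      and f: "f = (\<lambda>x. if x \<in> T then count M x + 1 else 0)"
      unfolding multisets_of_size_def by blast
    have "sum f T = sum (\<lambda>x. count M x + 1) T" unfolding f by simp
    also have "\<dots> = size M + card T" using size_count_sum[OF fin M(1)] by (simp add: sum_Suc)
    finally have "sum f T = i" using M ik by simp
    moreover have "{x. 0 < f x} = T" unfolding f by auto
    ultimately show "f \<in> Pset T i" unfolding Pset_def by blast
  qed
next
  show "Pset T i \<subseteq> (\<lambda>M x. if x \<in> T then count M x + 1 else 0) ` multisets_of_size T (i - card T)"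
  proof
    fix m assume "m \<in> Pset T i"
    then have supp: "{x. 0 < m x} = T" and s: "sum m T = i" unfolding Pset_def by auto
    define M where "M = Abs_multiset (\<lambda>x. m x - 1)"
    have finsupp: "finite {x. 0 < m x - 1}"
      by (rule finite_subset[OF _ fin]) (use supp in auto)
    have cM: "count M = (\<lambda>x. m x - 1)" unfolding M_def by (rule count_Abs_multiset[OF finsupp])
    have setM: "set_mset M \<subseteq> T" using supp by (auto simp: set_mset_def cM)
    have "size M = sum (\<lambda>x. m x - 1) T" using size_count_sum[OF fin setM] cM by simp
    also have "\<dots> = sum m T - card T"
    proof -
      have "sum (\<lambda>x. m x - 1) T + card T = sum m T"
      proof -
        have "sum (\<lambda>x. m x - 1) T + card T = sum (\<lambda>x. Suc (m x - 1)) T" by (simp add: sum_Suc)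
        also have "\<dots> = sum m T" using supp by (intro sum.cong) auto
        finally show ?thesis .
      qed
      then show ?thesis by simp
    qed
    finally have sz: "size M = i - card T" using s by simp
    have "m = (\<lambda>x. if x \<in> T then count M x + 1 else 0)"
      using supp by (auto simp: cM fun_eq_iff)
    then show "m \<in> (\<lambda>M x. if x \<in> T then count M x + 1 else 0) ` multisets_of_size T (i - card T)"
      using setM sz unfolding multisets_of_size_def by blast
  qed
qed

lemma Pset_small:
  assumes fin: "finite T" and ik: "i < card T"
  shows "Pset T i = {}"
proof (rule ccontr)
  assume "Pset T i \<noteq> {}"
  then obtain m where supp: "{x. 0 < m x} = T" and s: "sum m T = i" unfolding Pset_def by blast
  have "sum (\<lambda>_. 1::nat) T \<le> sum m T" using supp by (intro sum_mono) auto
  then show False using s ik by simp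
qed

lemma Pset_finite:
  assumes fin: "finite T"
  shows "finite (Pset T i)"
proof (cases "card T \<le> i")
  case True
  then show ?thesis using Pset_image[OF fin True] finite_multisets_of_size[OF fin] by simp
next
  case False
  then show ?thesis using Pset_small[OF fin] by simp
qed

lemma Pset_card:
  assumes fin: "finite T"
  shows "card (Pset T i) = (if i < card T then 0 else (card T + (i - card T) - 1) choose (i - card T))"
proof (cases "card T \<le> i")
  case True
  have inj: "inj_on (\<lambda>M x. if x \<in> T then count M x + 1 else 0) (multisets_of_size T (i - card T))"
  proof (rule inj_onI)
    fix M N assume MN: "M \<in> multisets_of_size T (i - card T)" "N \<in> multisets_of_size T (i - card T)"
      and eq: "(\<lambda>x. if x \<in> T then count M x + 1 else 0) = (\<lambda>x. if x \<in> T then count N x + 1 else 0)"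
    show "M = N"
    proof (rule multiset_eqI)
      fix x show "count M x = count N x"
      proof (cases "x \<in> T")
        case True then show ?thesis using fun_cong[OF eq, of x] by simp
      next
        case False then show ?thesis using MN unfolding multisets_of_size_def
          by (metis count_eq_zero_iff mem_Collect_eq subsetD)
      qed
    qed
  qed
  show ?thesis using True Pset_image[OF fin True] card_image[OF inj] card_multisets_of_size[OF fin] by simp
next
  case False
  then show ?thesis using Pset_small[OF fin] by simp
qed

definition Gk :: "nat \<Rightarrow> int fps" where
  "Gk k = Abs_fps (\<lambda>n. int ((k + n - 1) choose n))"

lemma Gk_Suc: "Gk (Suc k) * (1 - fps_X) = Gk k"
proof (rule fps_ext)
  fix n
  show "(Gk (Suc k) * (1 - fps_X)) $ n = Gk k $ n"
  proof (cases n)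
    case 0 then show ?thesis by (simp add: Gk_def algebra_simps)
  next
    case (Suc n')
    have "(Gk (Suc k) * (1 - fps_X)) $ n = Gk (Suc k) $ n - Gk (Suc k) $ n'"
      using Suc by (simp add: algebra_simps fps_mult_fps_X_commute[symmetric])
    also have "\<dots> = int ((k + n) choose n) - int ((k + n') choose n')"
      by (simp add: Gk_def Suc)
    also have "\<dots> = int ((k + n - 1) choose n)"
      using Suc by (simp add: binomial_Suc_Suc)
    finally show ?thesis by (simp add: Gk_def)
  qed
qed

lemma Gk_inv: "Gk k * (1 - fps_X) ^ k = 1"
proof (induction k)
  case 0
  show ?case
  proof (rule fps_ext)
    fix n show "(Gk 0 * (1 - fps_X) ^ 0) $ n = (1::int fps) $ n"
      by (cases n) (simp_all add: Gk_def)
  qed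
next
  case (Suc k)
  have "Gk (Suc k) * (1 - fps_X) ^ Suc k = (Gk (Suc k) * (1 - fps_X)) * (1 - fps_X) ^ k"
    by (simp add: algebra_simps)
  then show ?case using Suc Gk_Suc by simp
qed

lemma Pset_fps:
  assumes fin: "finite T"
  shows "Abs_fps (\<lambda>i. int (card (Pset T i))) = fps_X ^ card T * Gk (card T)"
proof (rule fps_ext)
  fix n show "Abs_fps (\<lambda>i. int (card (Pset T i))) $ n = (fps_X ^ card T * Gk (card T)) $ n"
    by (simp add: fps_X_power_mult_nth Pset_card[OF fin] Gk_def)
qed





definition Ind :: "'a set \<Rightarrow> 'a set set \<Rightarrow> 'a set set" where
  "Ind Vs E = {T. T \<subseteq> Vs \<and> independent E T}"

lemma Ind_finite: "finite Vs \<Longrightarrow> finite (Ind Vs E)"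
  unfolding Ind_def by (rule finite_subset[of _ "Pow Vs"]) auto

lemma hilbert_fun_sum:
  assumes G: "simple_graph Vs E"
  shows "hilbert_fun Vs E i = (\<Sum>T\<in>Ind Vs E. card (Pset T i))"
proof -
  have fin: "finite Vs" using G unfolding simple_graph_def by simp
  have eq: "{m :: 'a \<Rightarrow> nat. (\<forall>x. x \<notin> Vs \<longrightarrow> m x = 0) \<and>
       (\<Sum>x\<in>Vs. m x) = i \<and> (\<forall>e\<in>E. \<not> (\<forall>x\<in>e. 0 < m x))} = (\<Union>T\<in>Ind Vs E. Pset T i)"
  proof (intro equalityI subsetI)
    fix m assume "m \<in> {m :: 'a \<Rightarrow> nat. (\<forall>x. x \<notin> Vs \<longrightarrow> m x = 0) \<and>
       (\<Sum>x\<in>Vs. m x) = i \<and> (\<forall>e\<in>E. \<not> (\<forall>x\<in>e. 0 < m x))}"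
    then have m0: "\<forall>x. x \<notin> Vs \<longrightarrow> m x = 0" and ms: "(\<Sum>x\<in>Vs. m x) = i"
      and me: "\<forall>e\<in>E. \<not> (\<forall>x\<in>e. 0 < m x)" by auto
    define T where "T = {x. 0 < m x}"
    have TV: "T \<subseteq> Vs" using m0 unfolding T_def by auto
    have "independent E T" unfolding independent_def adj_def
    proof (intro ballI notI)
      fix x y assume "x \<in> T" "y \<in> T" "{x, y} \<in> E"
      then show False using me unfolding T_def by fastforce
    qed
    then have "T \<in> Ind Vs E" using TV unfolding Ind_def by simp
    moreover have "sum m T = i"
    proof -
      have "sum m T = sum m Vs"
        using fin TV by (intro sum.mono_neutral_left) (auto simp: T_def)
      then show ?thesis using ms by simp
    qed
    ultimately show "m \<in> (\<Union>T\<in>Ind Vs E. Pset T i)" unfolding Pset_def T_def by blast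
  next
    fix m assume "m \<in> (\<Union>T\<in>Ind Vs E. Pset T i)"
    then obtain T where T: "T \<subseteq> Vs" "independent E T" and supp: "{x. 0 < m x} = T"
      and s: "sum m T = i" unfolding Ind_def Pset_def by blast
    have m0: "\<forall>x. x \<notin> Vs \<longrightarrow> m x = 0" using T supp by auto
    have "sum m T = sum m Vs"
      using fin T supp by (intro sum.mono_neutral_left) auto
    then have "sum m Vs = i" using s by simp
    moreover have "\<forall>e\<in>E. \<not> (\<forall>x\<in>e. 0 < m x)"
    proof (intro ballI notI)
      fix e assume e: "e \<in> E" and pos: "\<forall>x\<in>e. 0 < m x"
      then have "card e = 2" using G unfolding simple_graph_def by blast
      then obtain x y where "e = {x, y}" by (meson card_2_iff)
      then show False using pos T(2) supp e unfolding independent_def adj_def by auto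
    qed
    ultimately show "m \<in> {m :: 'a \<Rightarrow> nat. (\<forall>x. x \<notin> Vs \<longrightarrow> m x = 0) \<and>
       (\<Sum>x\<in>Vs. m x) = i \<and> (\<forall>e\<in>E. \<not> (\<forall>x\<in>e. 0 < m x))}" using m0 by simp
  qed
  have "hilbert_fun Vs E i = card (\<Union>T\<in>Ind Vs E. Pset T i)"
    unfolding hilbert_fun_def eq ..
  also have "\<dots> = (\<Sum>T\<in>Ind Vs E. card (Pset T i))"
  proof (rule card_UN_disjoint)
    show "finite (Ind Vs E)" using Ind_finite[OF fin] .
    show "\<forall>T\<in>Ind Vs E. finite (Pset T i)"
      using Pset_finite fin finite_subset unfolding Ind_def by blast
    show "\<forall>T\<in>Ind Vs E. \<forall>T'\<in>Ind Vs E. T \<noteq> T' \<longrightarrow> Pset T i \<inter> Pset T' i = {}"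
      unfolding Pset_def by blast
  qed
  finally show ?thesis .
qed

lemma hilbert_series_sum:
  assumes G: "simple_graph Vs E"
  shows "hilbert_series Vs E = (\<Sum>T\<in>Ind Vs E. fps_X ^ card T * Gk (card T))"
proof -
  have fin: "finite Vs" using G unfolding simple_graph_def by simp
  have finT: "\<And>T. T \<in> Ind Vs E \<Longrightarrow> finite T" using fin finite_subset unfolding Ind_def by blast
  show ?thesis
  proof (rule fps_ext)
    fix n
    have "hilbert_series Vs E $ n = (\<Sum>T\<in>Ind Vs E. int (card (Pset T n)))"
      unfolding hilbert_series_def using hilbert_fun_sum[OF G] by simp
    also have "\<dots> = (\<Sum>T\<in>Ind Vs E. Abs_fps (\<lambda>i. int (card (Pset T i))) $ n)" by simp
    also have "\<dots> = (\<Sum>T\<in>Ind Vs E. (fps_X ^ card T * Gk (card T)) $ n)"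
    proof (intro sum.cong refl)
      fix T assume "T \<in> Ind Vs E"
      then show "Abs_fps (\<lambda>i. int (card (Pset T i))) $ n = (fps_X ^ card T * Gk (card T)) $ n"
        using Pset_fps finT by metis
    qed
    also have "\<dots> = (\<Sum>T\<in>Ind Vs E. fps_X ^ card T * Gk (card T)) $ n"
      by (simp add: fps_sum_nth)
    finally show "hilbert_series Vs E $ n = (\<Sum>T\<in>Ind Vs E. fps_X ^ card T * Gk (card T)) $ n" .
  qed
qed





lemma alpha_Ind: "alpha Vs E = Max (card ` Ind Vs E)"
  unfolding alpha_def Ind_def by (rule arg_cong[where f=Max]) blast

definition p1 :: "int poly" where "p1 = [:1, -1:]"

lemma fps_p1: "fps_of_poly p1 = 1 - fps_X"
  unfolding p1_def by (simp add: fps_of_poly_pCons fps_const_neg)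

lemma poly_p1: "poly p1 1 = 0" unfolding p1_def by simp

lemma p1_power: "degree (p1 ^ j) = j" "lead_coeff (p1 ^ j) = (-1) ^ j"
proof -
  have "p1 \<noteq> 0" "degree p1 = 1" "lead_coeff p1 = -1" unfolding p1_def by auto
  then show d: "degree (p1 ^ j) = j" by (simp add: degree_power_eq)
  have "lead_coeff (p1 ^ j) = lead_coeff p1 ^ j" by (rule lead_coeff_power)
  then show "lead_coeff (p1 ^ j) = (-1) ^ j" using \<open>lead_coeff p1 = -1\<close> by simp
qed

definition hp :: "'a set \<Rightarrow> 'a set set \<Rightarrow> int poly" where
  "hp Vs E = (\<Sum>T\<in>Ind Vs E. monom 1 (card T) * p1 ^ (alpha Vs E - card T))"

lemma Ind_facts:
  assumes G: "simple_graph Vs E"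
  shows "finite (Ind Vs E)" "{} \<in> Ind Vs E" "\<And>T. T \<in> Ind Vs E \<Longrightarrow> card T \<le> alpha Vs E"
    "\<exists>T\<in>Ind Vs E. card T = alpha Vs E" "\<And>T. T \<in> Ind Vs E \<Longrightarrow> finite T"
proof -
  have fin: "finite Vs" using G unfolding simple_graph_def by simp
  show f: "finite (Ind Vs E)" using Ind_finite[OF fin] .
  show e: "{} \<in> Ind Vs E" unfolding Ind_def independent_def by simp
  show "\<And>T. T \<in> Ind Vs E \<Longrightarrow> card T \<le> alpha Vs E" unfolding alpha_Ind using f by simp
  have "Max (card ` Ind Vs E) \<in> card ` Ind Vs E" using f e by (intro Max_in) auto
  then show "\<exists>T\<in>Ind Vs E. card T = alpha Vs E" unfolding alpha_Ind by auto
  show "\<And>T. T \<in> Ind Vs E \<Longrightarrow> finite T" using fin finite_subset unfolding Ind_def by blast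
qed

lemma hp_fps:
  assumes G: "simple_graph Vs E"
  shows "fps_of_poly (hp Vs E) = hilbert_series Vs E * (1 - fps_X) ^ alpha Vs E"
proof -
  note I = Ind_facts[OF G]
  have "hilbert_series Vs E * (1 - fps_X) ^ alpha Vs E
     = (\<Sum>T\<in>Ind Vs E. fps_X ^ card T * Gk (card T) * (1 - fps_X) ^ alpha Vs E)"
    unfolding hilbert_series_sum[OF G] by (simp add: sum_distrib_right)
  also have "\<dots> = (\<Sum>T\<in>Ind Vs E. fps_X ^ card T * (1 - fps_X) ^ (alpha Vs E - card T))"
  proof (intro sum.cong refl)
    fix T assume T: "T \<in> Ind Vs E"
    then have pa: "(1 - fps_X :: int fps) ^ alpha Vs E = (1 - fps_X) ^ card T * (1 - fps_X) ^ (alpha Vs E - card T)"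
      using I(3) by (simp only: power_add[symmetric]) simp
    have "fps_X ^ card T * Gk (card T) * (1 - fps_X) ^ alpha Vs E
       = fps_X ^ card T * (Gk (card T) * (1 - fps_X) ^ card T) * (1 - fps_X) ^ (alpha Vs E - card T)"
      unfolding pa by (simp only: mult.assoc)
    then show "fps_X ^ card T * Gk (card T) * (1 - fps_X) ^ alpha Vs E = fps_X ^ card T * (1 - fps_X) ^ (alpha Vs E - card T)"
      using Gk_inv[of "card T"] by simp
  qed
  also have "\<dots> = fps_of_poly (hp Vs E)"
    unfolding hp_def by (simp add: fps_of_poly_sum fps_of_poly_mult fps_of_poly_power fps_p1 fps_of_poly_monom')
  finally show ?thesis by simp
qed

lemma hp_poly1:
  assumes G: "simple_graph Vs E"
  shows "poly (hp Vs E) 1 \<noteq> 0"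
proof -
  note I = Ind_facts[OF G]
  have "poly (hp Vs E) 1 = (\<Sum>T\<in>Ind Vs E. (0::int) ^ (alpha Vs E - card T))"
    unfolding hp_def by (simp add: poly_sum poly_monom poly_p1)
  also have "\<dots> = (\<Sum>T\<in>Ind Vs E. if card T = alpha Vs E then 1 else 0)"
  proof (intro sum.cong refl)
    fix T assume "T \<in> Ind Vs E"
    then have "card T \<le> alpha Vs E" using I(3) by blast
    then show "(0::int) ^ (alpha Vs E - card T) = (if card T = alpha Vs E then 1 else 0)" by auto
  qed
  also have "\<dots> = int (card {T\<in>Ind Vs E. card T = alpha Vs E})"
    using I(1) by (simp add: sum.If_cases Int_def)
  also have "\<dots> > 0" using I(1,4) by (auto simp: card_gt_0_iff)
  finally show ?thesis by simp
qed

lemma h_poly_eq: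
  assumes G: "simple_graph Vs E"
  shows "h_poly Vs E = hp Vs E"
  unfolding h_poly_def
proof (rule the_equality)
  show "\<exists>d. fps_of_poly (hp Vs E) = hilbert_series Vs E * (1 - fps_X) ^ d \<and> poly (hp Vs E) 1 \<noteq> 0"
    using hp_fps[OF G] hp_poly1[OF G] by blast
next
  fix h assume "\<exists>d. fps_of_poly h = hilbert_series Vs E * (1 - fps_X) ^ d \<and> poly h 1 \<noteq> 0"
  then obtain d where hd: "fps_of_poly h = hilbert_series Vs E * (1 - fps_X) ^ d" and h1: "poly h 1 \<noteq> 0"
    by blast
  let ?a = "alpha Vs E"
  show "h = hp Vs E"
  proof (cases "d \<le> ?a")
    case True
    have "fps_of_poly (hp Vs E) = hilbert_series Vs E * (1 - fps_X) ^ d * (1 - fps_X) ^ (?a - d)"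
      using hp_fps[OF G] True by (simp add: mult.assoc power_add[symmetric])
    also have "\<dots> = fps_of_poly (h * p1 ^ (?a - d))"
      using hd by (simp add: fps_of_poly_mult fps_of_poly_power fps_p1)
    finally have eq: "hp Vs E = h * p1 ^ (?a - d)" by (simp add: fps_of_poly_eq_iff)
    then have "poly (hp Vs E) 1 = poly h 1 * 0 ^ (?a - d)" by (simp add: poly_p1)
    then have "?a - d = 0" using hp_poly1[OF G] by (cases "?a - d") auto
    then show ?thesis using eq by simp
  next
    case False
    have "fps_of_poly h = hilbert_series Vs E * (1 - fps_X) ^ ?a * (1 - fps_X) ^ (d - ?a)"
      using hd False by (simp add: mult.assoc power_add[symmetric])
    also have "\<dots> = fps_of_poly (hp Vs E * p1 ^ (d - ?a))"
      using hp_fps[OF G] by (simp add: fps_of_poly_mult fps_of_poly_power fps_p1)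
    finally have "h = hp Vs E * p1 ^ (d - ?a)" by (simp add: fps_of_poly_eq_iff)
    then have "poly h 1 = 0" using False by (simp add: poly_p1)
    then show ?thesis using h1 by simp
  qed
qed

lemma hp_coeff:
  assumes G: "simple_graph Vs E" and n: "n \<ge> alpha Vs E"
  shows "coeff (hp Vs E) n = (if n = alpha Vs E then (\<Sum>T\<in>Ind Vs E. (-1) ^ (alpha Vs E - card T)) else 0)"
proof -
  note I = Ind_facts[OF G]
  have "coeff (hp Vs E) n = (\<Sum>T\<in>Ind Vs E. coeff (p1 ^ (alpha Vs E - card T)) (n - card T))"
    unfolding hp_def coeff_sum coeff_monom_mult
  proof (intro sum.cong refl)
    fix T assume "T \<in> Ind Vs E"
    then have "card T \<le> alpha Vs E" using I(3) by blast
    then show "(if n < card T then 0 else 1 * coeff (p1 ^ (alpha Vs E - card T)) (n - card T)) = coeff (p1 ^ (alpha Vs E - card T)) (n - card T)"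
      using n by auto
  qed
  also have "\<dots> = (\<Sum>T\<in>Ind Vs E. if n = alpha Vs E then (-1) ^ (alpha Vs E - card T) else 0)"
  proof (intro sum.cong refl)
    fix T assume T: "T \<in> Ind Vs E"
    show "coeff (p1 ^ (alpha Vs E - card T)) (n - card T) = (if n = alpha Vs E then (-1) ^ (alpha Vs E - card T) else 0)"
    proof (cases "n = alpha Vs E")
      case True then show ?thesis using p1_power by simp
    next
      case False
      then have "n - card T > degree (p1 ^ (alpha Vs E - card T))" using p1_power n I(3)[OF T] by simp
      then show ?thesis using False coeff_eq_0 by auto
    qed
  qed
  finally show ?thesis by simp
qed

lemma degree_hp:
  assumes G: "simple_graph Vs E"
  shows "degree (hp Vs E) = alpha Vs E \<longleftrightarrow> (\<Sum>T\<in>Ind Vs E. (-1::int) ^ card T) \<noteq> 0"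
proof -
  note I = Ind_facts[OF G]
  let ?a = "alpha Vs E"
  have le: "degree (hp Vs E) \<le> ?a"
    by (rule degree_le) (use hp_coeff[OF G] in auto)
  have sig: "(\<Sum>T\<in>Ind Vs E. (-1::int) ^ (?a - card T)) = (-1) ^ ?a * (\<Sum>T\<in>Ind Vs E. (-1::int) ^ card T)"
    unfolding sum_distrib_left
  proof (intro sum.cong refl)
    fix T assume T: "T \<in> Ind Vs E"
    have "(-1::int) ^ ?a = (-1) ^ (?a - card T) * (-1) ^ card T"
      using I(3)[OF T] by (simp add: power_add[symmetric])
    then have "(-1::int) ^ ?a * (-1) ^ card T = (-1) ^ (?a - card T) * ((-1) ^ card T * (-1) ^ card T)"
      by (simp add: mult.assoc)
    also have "(-1::int) ^ card T * (-1) ^ card T = 1" by (simp add: power_add[symmetric] flip: power_mult_distrib)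
    finally show "(-1::int) ^ (?a - card T) = (-1) ^ ?a * (-1) ^ card T" by simp
  qed
  have c: "coeff (hp Vs E) ?a = (-1) ^ ?a * (\<Sum>T\<in>Ind Vs E. (-1::int) ^ card T)"
    using hp_coeff[OF G, of ?a] sig by simp
  show ?thesis
  proof
    assume d: "degree (hp Vs E) = ?a"
    have "hp Vs E \<noteq> 0" using hp_poly1[OF G] by auto
    then have "coeff (hp Vs E) ?a \<noteq> 0" using d by (metis leading_coeff_0_iff)
    then show "(\<Sum>T\<in>Ind Vs E. (-1::int) ^ card T) \<noteq> 0" using c by auto
  next
    assume "(\<Sum>T\<in>Ind Vs E. (-1::int) ^ card T) \<noteq> 0"
    then have "coeff (hp Vs E) ?a \<noteq> 0" using c by simp
    then have "?a \<le> degree (hp Vs E)" by (rule le_degree)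
    then show "degree (hp Vs E) = ?a" using le by simp
  qed
qed




lemma adj_sym: "adj E x y = adj E y x"
  unfolding adj_def by (simp add: insert_commute)

lemma adj_symI: "adj E x y \<Longrightarrow> adj E y x"
  unfolding adj_def by (simp add: insert_commute)

lemma bip_adj:
  assumes "bipartition Vs E U V" "adj E x y"
  shows "(x \<in> U \<and> y \<in> V) \<or> (x \<in> V \<and> y \<in> U)"
  using assms unfolding bipartition_def adj_def by (metis doubleton_eq_iff)

lemma nbhd_empty: "nbhd E {} = {}" unfolding nbhd_def by simp

theorem theorem5p9:
  fixes Vs U V VW UL :: "'a set" and E :: "'a set set"
  assumes G: "simple_graph Vs E" and conn: "connected_graph Vs E"
    and bip: "bipartition Vs E U V" and UV: "card U \<ge> card V"
    and VW_def: "VW = {v\<in>V. \<exists>x. leaf Vs E x \<and> adj E v x}"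
    and UL_sub: "UL \<subseteq> U" and UL_leaves: "\<forall>u\<in>UL. leaf Vs E u"
    and UL_match: "\<forall>v\<in>VW. \<exists>!u. u \<in> UL \<and> adj E v u"
    and UL_card: "card UL = card VW"
  defines "X \<equiv> {S. S \<subseteq> U - UL \<and> S \<noteq> {} \<and> nbhd E S = V - VW}"
  defines "q \<equiv> int (card {S\<in>X. even (card S)}) - int (card {S\<in>X. odd (card S)})"
  shows "(V - VW = {} \<longrightarrow> degree (h_poly Vs E) = alpha Vs E) \<and>
         (V - VW \<noteq> {} \<longrightarrow> (degree (h_poly Vs E) = alpha Vs E \<longleftrightarrow> q \<noteq> 0))"
proof -
  have finVs: "finite Vs" using G unfolding simple_graph_def by simp
  have UVs: "U \<union> V = Vs" and UVd: "U \<inter> V = {}" and Vne: "V \<noteq> {}"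
    using bip unfolding bipartition_def by auto
  have finU: "finite U" and finV: "finite V" using finVs UVs by auto
  have finUL: "finite UL" using finU UL_sub finite_subset by blast
  have VWV: "VW \<subseteq> V" using VW_def by auto
  have finVW: "finite VW" using finV VWV finite_subset by blast
  define W where "W = V - VW"
  define U' where "U' = U - nbhd E VW"
  have UU': "U' \<subseteq> U" unfolding U'_def by auto
  have finU': "finite U'" using finU UU' finite_subset by blast
  have finW: "finite W" unfolding W_def using finV by simp
  have leafnb: "\<exists>w. w \<in> VW \<and> {y. adj E u y} = {w}" if u: "u \<in> UL" for u
  proof -
    have "card {y. adj E u y} = 1" using UL_leaves u unfolding leaf_def by blast
    then obtain w where w: "{y. adj E u y} = {w}" by (rule card_1_singletonE)
    then have "adj E u w" by auto
    then have "w \<in> V" using bip_adj[OF bip \<open>adj E u w\<close>] u UL_sub UVd by blast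
    moreover have "adj E w u" using \<open>adj E u w\<close> adj_sym by metis
    ultimately have "w \<in> VW" using UL_leaves u unfolding VW_def by blast
    then show ?thesis using w by blast
  qed
  have UL_nb: "UL \<subseteq> nbhd E VW"
  proof
    fix u assume "u \<in> UL"
    then obtain w where w: "w \<in> VW" "{y. adj E u y} = {w}" using leafnb by blast
    then have "adj E u w" by (metis insertI1 mem_Collect_eq)
    then have "adj E w u" by (rule adj_symI)
    then show "u \<in> nbhd E VW" unfolding nbhd_def using w(1) by blast
  qed
  have Uind: "\<not> adj E x y" if "x \<in> U" "y \<in> U" for x y
    using bip_adj[OF bip, of x y] that UVd by blast
  have Vind: "\<not> adj E x y" if "x \<in> V" "y \<in> V" for x y
    using bip_adj[OF bip, of x y] that UVd by blast
  define F0 where "F0 = {T0\<in>Ind Vs E. T0 \<inter> UL = {}}"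
  note I = Ind_facts[OF G]
  have step1: "(\<Sum>T\<in>Ind Vs E. (-1::int) ^ card T) = (\<Sum>T0\<in>{T0\<in>F0. UL \<subseteq> nbhd E T0}. (-1::int) ^ card T0)"
  proof (rule alt_split[OF finUL])
    show "finite F0" unfolding F0_def using I(1) by simp
    show "\<forall>T0\<in>F0. finite T0" unfolding F0_def using I(5) by blast
    show "\<forall>T0\<in>F0. T0 \<inter> UL = {}" unfolding F0_def by blast
    show "Ind Vs E = (\<Union>T0\<in>F0. (\<lambda>L. T0 \<union> L) ` Pow (UL - nbhd E T0))"
    proof (intro equalityI subsetI)
      fix T assume T: "T \<in> Ind Vs E"
      then have "T - UL \<in> F0" unfolding F0_def Ind_def independent_def by blast
      moreover have "T \<inter> UL \<in> Pow (UL - nbhd E (T - UL))"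
        using T unfolding Ind_def independent_def nbhd_def by blast
      moreover have "T = (T - UL) \<union> (T \<inter> UL)" by blast
      ultimately show "T \<in> (\<Union>T0\<in>F0. (\<lambda>L. T0 \<union> L) ` Pow (UL - nbhd E T0))" by blast
    next
      fix T assume "T \<in> (\<Union>T0\<in>F0. (\<lambda>L. T0 \<union> L) ` Pow (UL - nbhd E T0))"
      then obtain T0 L where T0: "T0 \<in> F0" and L: "L \<subseteq> UL - nbhd E T0" and T: "T = T0 \<union> L" by blast
      have "T \<subseteq> Vs" using T0 L UL_sub UVs unfolding F0_def Ind_def T by blast
      moreover have "independent E T" unfolding independent_def
      proof (intro ballI notI)
        fix x y assume xy: "x \<in> T" "y \<in> T" "adj E x y"
        have i0: "independent E T0" using T0 unfolding F0_def Ind_def by blast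
        consider "x \<in> T0" "y \<in> T0" | "x \<in> L" "y \<in> L" | "x \<in> T0" "y \<in> L" | "x \<in> L" "y \<in> T0"
          using xy T by blast
        then show False
        proof cases
          case 1 then show ?thesis using i0 xy unfolding independent_def by blast
        next
          case 2 then show ?thesis using Uind xy L UL_sub by blast
        next
          case 3 then show ?thesis using xy L unfolding nbhd_def by blast
        next
          case 4 then show ?thesis using xy L adj_symI[OF xy(3)] unfolding nbhd_def by blast
        qed
      qed
      ultimately show "T \<in> Ind Vs E" unfolding Ind_def by blast
    qed
  qed
  define Ind1 where "Ind1 = {T1. T1 \<subseteq> U' \<union> W \<and> independent E T1}"
  have finInd1: "finite Ind1" unfolding Ind1_def
    by (rule finite_subset[of _ "Pow (U' \<union> W)"]) (use finU' finW in auto)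
  have set2: "{T0\<in>F0. UL \<subseteq> nbhd E T0} = (\<lambda>T1. VW \<union> T1) ` Ind1"
  proof (intro equalityI subsetI)
    fix T0 assume "T0 \<in> {T0\<in>F0. UL \<subseteq> nbhd E T0}"
    then have T0: "T0 \<subseteq> Vs" "independent E T0" "T0 \<inter> UL = {}" "UL \<subseteq> nbhd E T0"
      unfolding F0_def Ind_def by auto
    have VWT0: "VW \<subseteq> T0"
    proof
      fix v assume v: "v \<in> VW"
      then obtain u where u: "u \<in> UL" "adj E v u" using UL_match by blast
      then obtain x where x: "x \<in> T0" "adj E x u" using T0(4) unfolding nbhd_def by blast
      obtain w where w: "{y. adj E u y} = {w}" using leafnb u(1) by blast
      have "adj E u x" "adj E u v" using u(2) x(2) by (simp_all add: adj_symI)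
      then have "x \<in> {y. adj E u y}" "v \<in> {y. adj E u y}" by auto
      then have "x = v" unfolding w by simp
      then show "v \<in> T0" using x by simp
    qed
    have "T0 - VW \<subseteq> U' \<union> W"
    proof
      fix x assume x: "x \<in> T0 - VW"
      then have "x \<in> U \<or> x \<in> V" using T0(1) UVs by blast
      then show "x \<in> U' \<union> W"
      proof
        assume "x \<in> V" then show ?thesis using x unfolding W_def by blast
      next
        assume xU: "x \<in> U"
        have "x \<notin> nbhd E VW"
        proof
          assume "x \<in> nbhd E VW"
          then obtain v where "v \<in> VW" "adj E v x" unfolding nbhd_def by blast
          then show False using T0(2) VWT0 x unfolding independent_def by blast
        qed
        then show ?thesis using xU unfolding U'_def by blast
      qed
    qed
    moreover have "independent E (T0 - VW)" using T0(2) unfolding independent_def by blast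
    ultimately have "T0 - VW \<in> Ind1" unfolding Ind1_def by blast
    moreover have "T0 = VW \<union> (T0 - VW)" using VWT0 by blast
    ultimately show "T0 \<in> (\<lambda>T1. VW \<union> T1) ` Ind1" by blast
  next
    fix T0 assume "T0 \<in> (\<lambda>T1. VW \<union> T1) ` Ind1"
    then obtain T1 where T1: "T1 \<subseteq> U' \<union> W" "independent E T1" and T0: "T0 = VW \<union> T1"
      unfolding Ind1_def by blast
    have "T0 \<subseteq> Vs" using T0 T1 VWV UU' UVs unfolding W_def by blast
    moreover have "T0 \<inter> UL = {}" using T0 T1 UL_nb VWV UL_sub UVd unfolding U'_def W_def by blast
    moreover have "UL \<subseteq> nbhd E T0"
    proof
      fix u assume "u \<in> UL"
      then obtain w where w: "w \<in> VW" "{y. adj E u y} = {w}" using leafnb by blast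
      then have "adj E u w" by (metis insertI1 mem_Collect_eq)
      then have "adj E w u" by (rule adj_symI)
      then show "u \<in> nbhd E T0" unfolding nbhd_def T0 using w(1) by blast
    qed
    moreover have "independent E T0" unfolding independent_def
    proof (intro ballI notI)
      fix x y assume xy: "x \<in> T0" "y \<in> T0" "adj E x y"
      consider "x \<in> T1" "y \<in> T1" | "x \<in> VW" "y \<in> VW" | "x \<in> VW" "y \<in> T1" | "x \<in> T1" "y \<in> VW"
        using xy T0 by blast
      then show False
      proof cases
        case 1 then show ?thesis using T1 xy unfolding independent_def by blast
      next
        case 2 then show ?thesis using Vind xy VWV by blast
      next
        case 3
        then have "y \<in> U" using bip_adj[OF bip xy(3)] VWV UVd by blast
        then have "y \<in> U'" using 3 T1 UVd unfolding W_def by blast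
        then show ?thesis using 3 xy(3) unfolding U'_def nbhd_def by blast
      next
        case 4
        then have "x \<in> U" using bip_adj[OF bip xy(3)] VWV UVd by blast
        then have "x \<in> U'" using 4 T1 UVd unfolding W_def by blast
        then show ?thesis using 4 adj_symI[OF xy(3)] unfolding U'_def nbhd_def by blast
      qed
    qed
    ultimately show "T0 \<in> {T0\<in>F0. UL \<subseteq> nbhd E T0}" unfolding F0_def Ind_def by blast
  qed
  have disj1: "\<And>T1. T1 \<in> Ind1 \<Longrightarrow> VW \<inter> T1 = {}"
    unfolding Ind1_def U'_def W_def using VWV UVd by blast
  have finT1: "\<And>T1. T1 \<in> Ind1 \<Longrightarrow> finite T1"
    unfolding Ind1_def using finU' finW finite_subset by blast
  have step2: "(\<Sum>T0\<in>{T0\<in>F0. UL \<subseteq> nbhd E T0}. (-1::int) ^ card T0)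
      = (-1) ^ card VW * (\<Sum>T1\<in>Ind1. (-1::int) ^ card T1)"
  proof -
    have inj: "inj_on (\<lambda>T1. VW \<union> T1) Ind1"
    proof (rule inj_onI)
      fix A B assume "A \<in> Ind1" "B \<in> Ind1" "VW \<union> A = VW \<union> B"
      then show "A = B" using disj1 by blast
    qed
    have "(\<Sum>T0\<in>{T0\<in>F0. UL \<subseteq> nbhd E T0}. (-1::int) ^ card T0) = (\<Sum>T1\<in>Ind1. (-1::int) ^ card (VW \<union> T1))"
      unfolding set2 by (rule sum.reindex[OF inj, unfolded comp_def])
    also have "\<dots> = (\<Sum>T1\<in>Ind1. (-1) ^ card VW * (-1::int) ^ card T1)"
      by (intro sum.cong refl) (simp add: card_Un_disjoint finVW finT1 disj1 power_add)
    finally show ?thesis by (simp add: sum_distrib_left)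
  qed
  have step3: "(\<Sum>T1\<in>Ind1. (-1::int) ^ card T1) = (\<Sum>A\<in>{A\<in>Pow U'. W \<subseteq> nbhd E A}. (-1::int) ^ card A)"
  proof (rule alt_split[OF finW])
    show "finite (Pow U')" using finU' by simp
    show "\<forall>T0\<in>Pow U'. finite T0" using finU' finite_subset by blast
    show "\<forall>T0\<in>Pow U'. T0 \<inter> W = {}" using UU' UVd unfolding W_def by blast
    show "Ind1 = (\<Union>A\<in>Pow U'. (\<lambda>B. A \<union> B) ` Pow (W - nbhd E A))"
    proof (intro equalityI subsetI)
      fix T assume T: "T \<in> Ind1"
      then have "T - W \<in> Pow U'" unfolding Ind1_def by blast
      moreover have "T \<inter> W \<in> Pow (W - nbhd E (T - W))"
        using T unfolding Ind1_def independent_def nbhd_def by blast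
      moreover have "T = (T - W) \<union> (T \<inter> W)" by blast
      ultimately show "T \<in> (\<Union>A\<in>Pow U'. (\<lambda>B. A \<union> B) ` Pow (W - nbhd E A))" by blast
    next
      fix T assume "T \<in> (\<Union>A\<in>Pow U'. (\<lambda>B. A \<union> B) ` Pow (W - nbhd E A))"
      then obtain A B where A: "A \<subseteq> U'" and B: "B \<subseteq> W - nbhd E A" and T: "T = A \<union> B" by blast
      have "T \<subseteq> U' \<union> W" using A B T by blast
      moreover have "independent E T" unfolding independent_def
      proof (intro ballI notI)
        fix x y assume xy: "x \<in> T" "y \<in> T" "adj E x y"
        consider "x \<in> A" "y \<in> A" | "x \<in> B" "y \<in> B" | "x \<in> A" "y \<in> B" | "x \<in> B" "y \<in> A"
          using xy T by blast
        then show False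
        proof cases
          case 1 then show ?thesis using Uind xy A UU' by blast
        next
          case 2 then show ?thesis using Vind xy B unfolding W_def by blast
        next
          case 3 then show ?thesis using xy B unfolding nbhd_def by blast
        next
          case 4 then show ?thesis using xy B adj_symI[OF xy(3)] unfolding nbhd_def by blast
        qed
      qed
      ultimately show "T \<in> Ind1" unfolding Ind1_def by blast
    qed
  qed
  define tau where "tau = (\<Sum>A\<in>{A\<in>Pow U'. W \<subseteq> nbhd E A}. (-1::int) ^ card A)"
  have sig: "(\<Sum>T\<in>Ind Vs E. (-1::int) ^ card T) = (-1) ^ card VW * tau"
    unfolding tau_def using step1 step2 step3 by simp
  have degiff: "degree (h_poly Vs E) = alpha Vs E \<longleftrightarrow> tau \<noteq> 0"
    using degree_hp[OF G] h_poly_eq[OF G] sig by simp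
  have partA: "V - VW = {} \<longrightarrow> degree (h_poly Vs E) = alpha Vs E"
  proof
    assume W0: "V - VW = {}"
    have "U' = {}"
    proof (rule ccontr)
      assume "U' \<noteq> {}"
      then obtain u where u: "u \<in> U'" by blast
      obtain v where v: "v \<in> V" using Vne by blast
      have "u \<in> Vs" "v \<in> Vs" using u v UU' UVs by auto
      then have star: "(adj E)\<^sup>*\<^sup>* u v" using conn unfolding connected_graph_def by blast
      have "u \<noteq> v" using u v UU' UVd by blast
      obtain y where y: "adj E u y"
      proof (rule converse_rtranclpE[OF star])
        assume "u = v" then show thesis using \<open>u \<noteq> v\<close> by simp
      next
        fix y assume "adj E u y" then show thesis using that by blast
      qed
      then have "y \<in> V" using bip_adj[OF bip y] u UU' UVd by blast
      then have "y \<in> VW" using W0 by blast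
      then have "u \<in> nbhd E VW" using adj_symI[OF y] unfolding nbhd_def by blast
      then show False using u unfolding U'_def by blast
    qed
    then have "{A\<in>Pow U'. W \<subseteq> nbhd E A} = {{}}" unfolding W_def using W0 by auto
    then have "tau = 1" unfolding tau_def by simp
    then show "degree (h_poly Vs E) = alpha Vs E" using degiff by simp
  qed
  have partB: "V - VW \<noteq> {} \<longrightarrow> (degree (h_poly Vs E) = alpha Vs E \<longleftrightarrow> q \<noteq> 0)"
  proof
    assume Wne: "V - VW \<noteq> {}"
    have Xeq: "{A\<in>Pow U'. W \<subseteq> nbhd E A} = X"
    proof (intro equalityI subsetI)
      fix A assume "A \<in> {A\<in>Pow U'. W \<subseteq> nbhd E A}"
      then have A: "A \<subseteq> U'" "W \<subseteq> nbhd E A" by auto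
      have "A \<subseteq> U - UL" using A UL_nb unfolding U'_def by blast
      moreover have "A \<noteq> {}"
      proof
        assume "A = {}"
        then have "W \<subseteq> {}" using A(2) by (simp add: nbhd_empty)
        then show False using Wne unfolding W_def by simp
      qed
      moreover have "nbhd E A \<subseteq> W"
      proof
        fix y assume "y \<in> nbhd E A"
        then obtain a where a: "a \<in> A" "adj E a y" unfolding nbhd_def by blast
        then have "y \<in> V" using bip_adj[OF bip a(2)] A UU' UVd by blast
        moreover have "y \<notin> VW"
        proof
          assume "y \<in> VW"
          then have "a \<in> nbhd E VW" using a(1) adj_symI[OF a(2)] unfolding nbhd_def by blast
          then show False using a A unfolding U'_def by blast
        qed
        ultimately show "y \<in> W" unfolding W_def by blast
      qed
      ultimately show "A \<in> X" unfolding X_def using A(2) unfolding W_def by blast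
    next
      fix S assume "S \<in> X"
      then have S: "S \<subseteq> U - UL" "nbhd E S = W" unfolding X_def W_def by auto
      have "S \<subseteq> U'"
      proof
        fix s assume s: "s \<in> S"
        have "s \<notin> nbhd E VW"
        proof
          assume "s \<in> nbhd E VW"
          then obtain v where vv: "v \<in> VW" "adj E v s" unfolding nbhd_def by blast
          then have "v \<in> nbhd E S" using s adj_symI[OF vv(2)] unfolding nbhd_def by blast
          then show False using S \<open>v \<in> VW\<close> unfolding W_def by blast
        qed
        then show "s \<in> U'" using s S unfolding U'_def by blast
      qed
      then show "S \<in> {A\<in>Pow U'. W \<subseteq> nbhd E A}" using S by auto
    qed
    have finX: "finite X" unfolding X_def
      by (rule finite_subset[of _ "Pow U"]) (use finU in auto)
    have "tau = (\<Sum>S\<in>X. if even (card S) then 1 else (-1::int))"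
      unfolding tau_def Xeq by (intro sum.cong refl) simp
    also have "\<dots> = q"
      unfolding q_def using finX by (simp add: sum.If_cases Int_def)
    finally show "degree (h_poly Vs E) = alpha Vs E \<longleftrightarrow> q \<noteq> 0" using degiff by simp
  qed
  show ?thesis using partA partB by blast
qed


end
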